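(* Let $G$, $z$, $g_1,\dots,g_{2r}$, $S=\{g_1,\dots,g_{2r}\}$ and $\Gamma=\mathrm{Cay}(G,S)$ be as in the context. Then $\Gamma$ is $2$-arc-transitive; more precisely, the group $\hat G\rtimes\tilde S_{2r}\le\mathrm{Aut}(\Gamma)$ acts transitively on the $2$-arcs of $\Gamma$, where $\tilde S_{2r}=\{\tilde\sigma:\sigma\in S_{2r}\}$ is the group of automorphisms of $G$ with $g_i^{\tilde\sigma}=g_{i^\sigma}$ and $z^{\tilde\sigma}=z$, which fixes the vertex $1$ and acts on $S$ as the full symmetric group.
   Context: Let $r\ge1$ and $G$ an extraspecial $2$-group of order $2^{2r+1}$ (i.e. $|Z(G)|=2$, $G/Z(G)\cong\mathbb{Z}_2^{2r}$), $Z=Z(G)=\langle z\rangle$ identified with $\mathbb{F}_2$, and $G/Z$ equipped with the quadratic form $Q(Zx)=x^2$ and bilinear form $B(Zx,Zy)=[x,y]$. Assume $\{Zg_1,\dots,Zg_{2r}\}$ is a symmetric basis of $G/Z$ ($Q(Zg_i)=0$, $B(Zg_i,Zg_j)=1$ for $i\ne j$), so $g_i^2=1$ and $[g_i,g_j]=z$ for $i\neq j$. $\mathrm{Cay}(G,S)$ has vertex set $G$ and edges $\{x,sx\}$, $x\in G$, $s\in S$; $\hat G$ is the group of right multiplications $x\mapsto xg$. A $2$-arc is a triple $(u,v,w)$ with $u\sim v\sim w$ and $u\ne w$. *)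

theory Defs
  imports "HOL-Algebra.Algebra" "HOL-Combinatorics.Permutations"
begin

definition grp_center :: "('a, 'b) monoid_scheme \<Rightarrow> 'a set" where
  "grp_center G = {x \<in> carrier G. \<forall>y \<in> carrier G. x \<otimes>\<^bsub>G\<^esub> y = y \<otimes>\<^bsub>G\<^esub> x}"

definition grp_comm :: "('a, 'b) monoid_scheme \<Rightarrow> 'a \<Rightarrow> 'a \<Rightarrow> 'a" where
  "grp_comm G x y = inv\<^bsub>G\<^esub> x \<otimes>\<^bsub>G\<^esub> inv\<^bsub>G\<^esub> y \<otimes>\<^bsub>G\<^esub> x \<otimes>\<^bsub>G\<^esub> y"

definition cay_adj :: "('a, 'b) monoid_scheme \<Rightarrow> 'a set \<Rightarrow> 'a \<Rightarrow> 'a \<Rightarrow> bool" where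
  "cay_adj G S x y \<longleftrightarrow> x \<in> carrier G \<and> y \<in> carrier G \<and>
     (\<exists>s\<in>S. y = s \<otimes>\<^bsub>G\<^esub> x \<or> x = s \<otimes>\<^bsub>G\<^esub> y)"

definition two_arc :: "('a, 'b) monoid_scheme \<Rightarrow> 'a set \<Rightarrow> 'a \<Rightarrow> 'a \<Rightarrow> 'a \<Rightarrow> bool" where
  "two_arc G S u v w \<longleftrightarrow> cay_adj G S u v \<and> cay_adj G S v w \<and> u \<noteq> w"

definition cay_aut :: "('a, 'b) monoid_scheme \<Rightarrow> 'a set \<Rightarrow> ('a \<Rightarrow> 'a) \<Rightarrow> bool" where
  "cay_aut G S f \<longleftrightarrow> bij_betw f (carrier G) (carrier G) \<and>
     (\<forall>x\<in>carrier G. \<forall>y\<in>carrier G. cay_adj G S x y \<longleftrightarrow> cay_adj G S (f x) (f y))"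

end

theory Submission
  imports Defs
begin

locale xsp = group G for G (structure) +
  fixes z :: 'a and g :: "nat \<Rightarrow> 'a" and n :: nat
  assumes zG: "z \<in> carrier G" and z1: "z \<noteq> \<one>"
    and zc: "\<And>x. x \<in> carrier G \<Longrightarrow> z \<otimes> x = x \<otimes> z"
    and zz: "z \<otimes> z = \<one>"
    and cz: "\<And>x y. x \<in> carrier G \<Longrightarrow> y \<in> carrier G \<Longrightarrow> x \<otimes> y \<noteq> y \<otimes> x \<Longrightarrow> x \<otimes> y = y \<otimes> x \<otimes> z"
    and gG: "\<And>i. i \<in> {1..n} \<Longrightarrow> g i \<in> carrier G"
    and gsq: "\<And>i. i \<in> {1..n} \<Longrightarrow> g i \<otimes> g i = \<one>"
    and gc: "\<And>i j. i \<in> {1..n} \<Longrightarrow> j \<in> {1..n} \<Longrightarrow> i \<noteq> j \<Longrightarrow> g i \<otimes> g j = g j \<otimes> g i \<otimes> z"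
begin

definition zp :: "bool \<Rightarrow> 'a" where "zp b = (if b then \<one> else z)"

lemma zp_G[simp]: "zp b \<in> carrier G" using zG by (simp add: zp_def)
lemma zp_c: "x \<in> carrier G \<Longrightarrow> x \<otimes> zp b = zp b \<otimes> x" using zc by (simp add: zp_def)
lemma zp_c2: "x \<in> carrier G \<Longrightarrow> y \<in> carrier G \<Longrightarrow> x \<otimes> (zp b \<otimes> y) = zp b \<otimes> (x \<otimes> y)"
proof -
  assume x: "x \<in> carrier G" and y: "y \<in> carrier G"
  have "x \<otimes> (zp b \<otimes> y) = (x \<otimes> zp b) \<otimes> y" using x y by (simp add: m_assoc)
  also have "\<dots> = (zp b \<otimes> x) \<otimes> y" using zp_c[OF x] by simp
  finally show ?thesis using x y by (simp add: m_assoc)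
qed
lemma zp_mult: "zp a \<otimes> zp b = zp (a = b)" using zz zG by (simp add: zp_def)
lemma zp_one: "zp b = \<one> \<longleftrightarrow> b" using z1 by (simp add: zp_def)
lemma zp_cancel: "x \<in> carrier G \<Longrightarrow> x \<otimes> zp b = x \<longleftrightarrow> b"
  by (simp add: zp_one)

lemma comm_zp: "x \<in> carrier G \<Longrightarrow> t \<in> carrier G \<Longrightarrow> x \<otimes> t = t \<otimes> x \<otimes> zp (x \<otimes> t = t \<otimes> x)"
  using cz[of x t] by (auto simp: zp_def)

lemma comm_mult:
  assumes t: "t \<in> carrier G" and x: "x \<in> carrier G" and y: "y \<in> carrier G"
  shows "(x \<otimes> y) \<otimes> t = t \<otimes> (x \<otimes> y) \<longleftrightarrow> ((x \<otimes> t = t \<otimes> x) \<longleftrightarrow> (y \<otimes> t = t \<otimes> y))"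
proof -
  define A where "A = (x \<otimes> t = t \<otimes> x)"
  define B where "B = (y \<otimes> t = t \<otimes> y)"
  have xt: "x \<otimes> t = t \<otimes> x \<otimes> zp A" using comm_zp[OF x t] unfolding A_def .
  have yt: "y \<otimes> t = t \<otimes> y \<otimes> zp B" using comm_zp[OF y t] unfolding B_def .
  have "(x \<otimes> y) \<otimes> t = x \<otimes> (y \<otimes> t)" using t x y by (simp add: m_assoc)
  also have "\<dots> = x \<otimes> (t \<otimes> y \<otimes> zp B)" by (simp only: yt)
  also have "\<dots> = (x \<otimes> t) \<otimes> (y \<otimes> zp B)" using t x y by (simp add: m_assoc)
  also have "\<dots> = (t \<otimes> x \<otimes> zp A) \<otimes> (y \<otimes> zp B)" by (simp only: xt)
  also have "\<dots> = t \<otimes> x \<otimes> (zp A \<otimes> (y \<otimes> zp B))" using t x y by (simp add: m_assoc)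
  also have "zp A \<otimes> (y \<otimes> zp B) = y \<otimes> (zp A \<otimes> zp B)" using zp_c2[OF y zp_G[of B], of A] by simp
  also have "t \<otimes> x \<otimes> (y \<otimes> (zp A \<otimes> zp B)) = t \<otimes> (x \<otimes> y) \<otimes> (zp A \<otimes> zp B)" using t x y by (simp add: m_assoc)
  finally have "(x \<otimes> y) \<otimes> t = t \<otimes> (x \<otimes> y) \<otimes> zp (A = B)" by (simp add: zp_mult)
  then show ?thesis using zp_cancel[of "t \<otimes> (x \<otimes> y)" "A = B"] t x y unfolding A_def B_def by simp
qed

definition rflm :: "'a \<Rightarrow> 'a \<Rightarrow> 'a" where
  "rflm t x = (if x \<otimes> t = t \<otimes> x then x else x \<otimes> t)"

lemma rflm_iso:
  assumes t: "t \<in> carrier G" and tt: "t \<otimes> t = z"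
  shows "rflm t \<in> iso G G"
proof -
  have cl: "rflm t x \<in> carrier G" if "x \<in> carrier G" for x
    using that t by (simp add: rflm_def)
  have hom: "rflm t (x \<otimes> y) = rflm t x \<otimes> rflm t y" if x: "x \<in> carrier G" and y: "y \<in> carrier G" for x y
  proof (cases "x \<otimes> t = t \<otimes> x"; cases "y \<otimes> t = t \<otimes> y")
    assume a: "x \<otimes> t = t \<otimes> x" and b: "y \<otimes> t = t \<otimes> y"
    then show ?thesis using comm_mult[OF t x y] by (simp add: rflm_def)
  next
    assume a: "x \<otimes> t = t \<otimes> x" and b: "y \<otimes> t \<noteq> t \<otimes> y"
    then show ?thesis using comm_mult[OF t x y] x y t by (simp add: rflm_def m_assoc)
  next
    assume a: "x \<otimes> t \<noteq> t \<otimes> x" and b: "y \<otimes> t = t \<otimes> y"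
    then show ?thesis using comm_mult[OF t x y] x y t by (simp add: rflm_def m_assoc)
  next
    assume a: "x \<otimes> t \<noteq> t \<otimes> x" and b: "y \<otimes> t \<noteq> t \<otimes> y"
    have "x \<otimes> t \<otimes> (y \<otimes> t) = x \<otimes> t \<otimes> (t \<otimes> y \<otimes> z)" using cz[OF y t b] by simp
    also have "\<dots> = x \<otimes> (t \<otimes> t) \<otimes> y \<otimes> z" using x y t zG by (simp add: m_assoc)
    also have "\<dots> = x \<otimes> y \<otimes> (z \<otimes> z)" using x y t zG tt zc[of y] by (simp add: m_assoc)
    also have "\<dots> = x \<otimes> y" using zz x y by simp
    finally show ?thesis using a b comm_mult[OF t x y] by (simp add: rflm_def)
  qed
  have cm: "x \<otimes> t \<otimes> t = t \<otimes> (x \<otimes> t) \<longleftrightarrow> x \<otimes> t = t \<otimes> x" if x: "x \<in> carrier G" for x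
    using x t by (metis m_assoc m_closed r_cancel)
  have inj: "inj_on (rflm t) (carrier G)"
  proof (rule inj_onI)
    fix x y assume x: "x \<in> carrier G" and y: "y \<in> carrier G" and e: "rflm t x = rflm t y"
    show "x = y"
    proof (cases "x \<otimes> t = t \<otimes> x"; cases "y \<otimes> t = t \<otimes> y")
      assume "x \<otimes> t = t \<otimes> x" "y \<otimes> t \<noteq> t \<otimes> y"
      then show ?thesis using e cm[OF y] by (simp add: rflm_def)
    next
      assume "x \<otimes> t \<noteq> t \<otimes> x" "y \<otimes> t = t \<otimes> y"
      then show ?thesis using e cm[OF x] by (simp add: rflm_def)
    next
      assume "x \<otimes> t \<noteq> t \<otimes> x" "y \<otimes> t \<noteq> t \<otimes> y"
      then show ?thesis using e x y t by (simp add: rflm_def)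
    qed (use e in \<open>simp add: rflm_def\<close>)
  qed
  have surj: "carrier G \<subseteq> rflm t ` carrier G"
  proof
    fix y assume y: "y \<in> carrier G"
    show "y \<in> rflm t ` carrier G"
    proof (cases "y \<otimes> t = t \<otimes> y")
      case True
      then have "rflm t y = y" by (simp add: rflm_def)
      then show ?thesis using y by force
    next
      case False
      have yi: "y \<otimes> inv t \<in> carrier G" using y t by simp
      have e: "y \<otimes> inv t \<otimes> t = y" using y t by (simp add: m_assoc)
      have "\<not> (y \<otimes> inv t \<otimes> t = t \<otimes> (y \<otimes> inv t))" using cm[OF yi] e False by simp
      then have "rflm t (y \<otimes> inv t) = y" using e by (simp add: rflm_def)
      then show ?thesis using yi by force
    qed
  qed
  show ?thesis unfolding iso_iff using cl hom inj surj
    by (auto simp: hom_def intro!: subset_antisym)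
qed

definition conj :: "'a \<Rightarrow> 'a \<Rightarrow> 'a" where "conj u x = inv u \<otimes> x \<otimes> u"

lemma conj_iso: assumes u: "u \<in> carrier G" shows "conj u \<in> iso G G"
proof -
  have cl: "conj u x \<in> carrier G" if "x \<in> carrier G" for x
    using that u by (simp add: conj_def)
  have hom: "conj u (x \<otimes> y) = conj u x \<otimes> conj u y" if x: "x \<in> carrier G" and y: "y \<in> carrier G" for x y
    using x y u by (simp add: conj_def m_assoc) (simp add: m_assoc[symmetric])
  have inj: "inj_on (conj u) (carrier G)"
    by (rule inj_onI) (use u in \<open>simp add: conj_def\<close>)
  have surj: "carrier G \<subseteq> conj u ` carrier G"
  proof
    fix y assume y: "y \<in> carrier G"
    have "conj u (u \<otimes> y \<otimes> inv u) = y" using u y by (simp add: conj_def m_assoc) (simp add: m_assoc[symmetric])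
    then show "y \<in> conj u ` carrier G" using u y by (metis image_eqI m_closed inv_closed)
  qed
  show ?thesis unfolding iso_iff using cl hom inj surj
    by (auto simp: hom_def intro!: subset_antisym)
qed


definition P :: "nat list \<Rightarrow> 'a" where "P xs = foldr (\<lambda>l acc. g l \<otimes> acc) xs \<one>"

lemma P_G: "set xs \<subseteq> {1..n} \<Longrightarrow> P xs \<in> carrier G"
  by (induction xs) (auto simp: P_def gG)

lemma g_P: "m \<in> {1..n} \<Longrightarrow> set xs \<subseteq> {1..n} \<Longrightarrow>
   g m \<otimes> P xs = P xs \<otimes> g m \<otimes> zp (even (length (filter (\<lambda>l. l \<noteq> m) xs)))"
proof (induction xs)
  case Nil
  then show ?case using gG by (simp add: P_def zp_def)
next
  case (Cons l xs)
  let ?E = "even (length (filter (\<lambda>l. l \<noteq> m) xs))"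
  have l: "l \<in> {1..n}" and xs: "set xs \<subseteq> {1..n}" using Cons by auto
  have m: "g m \<in> carrier G" using Cons gG by auto
  have gl: "g l \<in> carrier G" using l gG by auto
  have Pxs: "P xs \<in> carrier G" using P_G xs by auto
  have ml: "g m \<otimes> g l = g l \<otimes> g m \<otimes> zp (l = m)"
    using gc[OF Cons(2) l] m by (cases "l = m") (auto simp: zp_def)
  have "g m \<otimes> P (l # xs) = (g m \<otimes> g l) \<otimes> P xs" using m gl Pxs by (simp add: P_def m_assoc)
  also have "\<dots> = (g l \<otimes> g m \<otimes> zp (l = m)) \<otimes> P xs" by (simp only: ml)
  also have "\<dots> = g l \<otimes> (g m \<otimes> (zp (l = m) \<otimes> P xs))" using m gl Pxs by (simp add: m_assoc)
  also have "\<dots> = g l \<otimes> (g m \<otimes> (P xs \<otimes> zp (l = m)))" by (simp only: zp_c[OF Pxs])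
  also have "\<dots> = g l \<otimes> (g m \<otimes> P xs) \<otimes> zp (l = m)" using m gl Pxs by (simp add: m_assoc)
  also have "\<dots> = g l \<otimes> (P xs \<otimes> g m \<otimes> zp ?E) \<otimes> zp (l = m)" using Cons xs by simp
  also have "\<dots> = P (l # xs) \<otimes> g m \<otimes> (zp ?E \<otimes> zp (l = m))" using m gl Pxs
    by (simp add: m_assoc P_def)
  also have "zp ?E \<otimes> zp (l = m) = zp (even (length (filter (\<lambda>l. l \<noteq> m) (l # xs))))"
    by (simp add: zp_mult)
  finally show ?case .
qed

lemma conj_P: "m \<in> {1..n} \<Longrightarrow> set xs \<subseteq> {1..n} \<Longrightarrow>
   conj (P xs) (g m) = g m \<otimes> zp (even (length (filter (\<lambda>l. l \<noteq> m) xs)))"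
  using g_P[of m xs] P_G[of xs] gG[of m] unfolding conj_def
  by (simp add: m_assoc) (simp add: m_assoc[symmetric])

lemma conj_z: "u \<in> carrier G \<Longrightarrow> conj u z = z"
  using zc[of u] zG by (simp add: conj_def m_assoc) (simp add: m_assoc[symmetric])

lemma len_aux: "a \<in> {1..n} \<Longrightarrow> m \<in> {1..n} \<Longrightarrow>
  length (filter (\<lambda>l. l \<noteq> m) (filter (\<lambda>l. l \<noteq> a) [1..<n+1])) = (if m = a then n - 1 else n - 2)"
proof -
  assume a: "a \<in> {1..n}" and m: "m \<in> {1..n}"
  have "length (filter (\<lambda>l. l \<noteq> m) (filter (\<lambda>l. l \<noteq> a) [1..<n+1]))
      = length (filter (\<lambda>l. l \<noteq> a \<and> l \<noteq> m) [1..<n+1])" by (simp add: filter_filter)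
  also have "\<dots> = card ({l. l \<noteq> a \<and> l \<noteq> m} \<inter> set [1..<n+1])"
    by (rule distinct_length_filter) simp
  also have "{l. l \<noteq> a \<and> l \<noteq> m} \<inter> set [1..<n+1] = {1..n} - {a} - {m}" by auto
  also have "card ({1..n} - {a} - {m}) = (if m = a then n - 1 else n - 2)" using a m
    by (auto simp: card_Diff_singleton)
  finally show ?thesis .
qed


lemma transp:
  assumes ev: "even n" and a: "a \<in> {1..n}" and b: "b \<in> {1..n}" and ab: "a \<noteq> b"
  shows "\<exists>\<tau>\<in>iso G G. (\<forall>k\<in>{1..n}. \<tau> (g k) = g (Transposition.transpose a b k)) \<and> \<tau> z = z"
proof -
  define t where "t = g a \<otimes> g b"
  define xs where "xs = filter (\<lambda>l. l \<noteq> a) [1..<n+1]"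
  define u where "u = P xs"
  have xs: "set xs \<subseteq> {1..n}" by (auto simp: xs_def)
  have u: "u \<in> carrier G" using P_G[OF xs] by (simp add: u_def)
  have ga: "g a \<in> carrier G" and gb: "g b \<in> carrier G" using a b gG by auto
  have t: "t \<in> carrier G" using ga gb by (simp add: t_def)
  have ba: "g b \<otimes> g a = g a \<otimes> g b \<otimes> z" using gc[OF b a] ab by simp
  have ab': "g a \<otimes> g b = g b \<otimes> g a \<otimes> z" using gc[OF a b ab] .
  have aa: "g a \<otimes> g a = \<one>" and bb: "g b \<otimes> g b = \<one>" using gsq a b by auto
  have tt: "t \<otimes> t = z"
  proof -
    have "t \<otimes> t = g a \<otimes> (g b \<otimes> g a) \<otimes> g b" using ga gb by (simp add: t_def m_assoc)
    also have "\<dots> = (g a \<otimes> g a) \<otimes> g b \<otimes> z \<otimes> g b" using ga gb zG by (simp add: ba m_assoc)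
    also have "\<dots> = g b \<otimes> z \<otimes> g b" using ga gb zG aa by simp
    also have "\<dots> = z \<otimes> (g b \<otimes> g b)" using zc[OF gb] gb zG by (simp add: m_assoc[symmetric])
    finally show ?thesis using bb zG by simp
  qed
  have n2: "n \<ge> 2" using a b ab by auto
  have cu: "conj u (g m) = (if m = a then g m \<otimes> z else g m)" if m: "m \<in> {1..n}" for m
  proof -
    have "conj u (g m) = g m \<otimes> zp (even (if m = a then n - 1 else n - 2))"
      using conj_P[OF m xs] len_aux[OF a m] by (simp add: u_def xs_def)
    then show ?thesis using ev n2 gG[OF m] by (auto simp: zp_def)
  qed
  have ne: "x \<in> carrier G \<Longrightarrow> x \<otimes> z \<noteq> x" for x using zp_cancel[of x False] by (simp add: zp_def)
  have ne2: "x \<in> carrier G \<Longrightarrow> z \<otimes> x \<noteq> x" for x using ne zc by metis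
  have r_a: "rflm t (g a) = g b"
  proof -
    have 1: "g a \<otimes> t = g b" using ga gb aa by (simp add: t_def m_assoc[symmetric])
    have "t \<otimes> g a = g a \<otimes> (g b \<otimes> g a)" using ga gb by (simp add: t_def m_assoc)
    also have "\<dots> = g b \<otimes> z" using ga gb zG aa by (simp add: ba m_assoc[symmetric])
    finally have "g a \<otimes> t \<noteq> t \<otimes> g a" using 1 ne[OF gb] by simp
    then show ?thesis using 1 by (simp add: rflm_def)
  qed
  have r_b: "rflm t (g b) = z \<otimes> g a"
  proof -
    have 1: "t \<otimes> g b = g a" using ga gb bb by (simp add: t_def m_assoc)
    have "g b \<otimes> t = (g b \<otimes> g a) \<otimes> g b" using ga gb by (simp add: t_def m_assoc)
    also have "\<dots> = g a \<otimes> (g b \<otimes> g b) \<otimes> z" using ga gb zG zc[OF gb] by (simp add: ba m_assoc)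
    also have "\<dots> = z \<otimes> g a" using bb ga zc[OF ga] by simp
    finally have 2: "g b \<otimes> t = z \<otimes> g a" .
    then have "g b \<otimes> t \<noteq> t \<otimes> g b" using 1 ne2[OF ga] by simp
    then show ?thesis using 2 by (simp add: rflm_def)
  qed
  have r_k: "rflm t (g k) = g k" if k: "k \<in> {1..n}" "k \<noteq> a" "k \<noteq> b" for k
  proof -
    have gk: "g k \<in> carrier G" using k gG by auto
    have "g k \<otimes> t = (g k \<otimes> g a) \<otimes> g b" using ga gb gk by (simp add: t_def m_assoc)
    also have "\<dots> = g a \<otimes> (g k \<otimes> g b) \<otimes> z" using gc[OF k(1) a k(2)] ga gb gk zG zc[OF gb]
      by (simp add: m_assoc)
    also have "\<dots> = g a \<otimes> g b \<otimes> g k \<otimes> (z \<otimes> z)" using gc[OF k(1) b k(3)] ga gb gk zG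
      by (simp add: m_assoc)
    finally have "g k \<otimes> t = t \<otimes> g k" using zz ga gb gk by (simp add: t_def)
    then show ?thesis by (simp add: rflm_def)
  qed
  have r_z: "rflm t z = z" using zc[OF t] by (simp add: rflm_def)
  have ci: "conj u \<in> iso G G" using conj_iso[OF u] .
  have chom: "conj u (x \<otimes> y) = conj u x \<otimes> conj u y" if "x \<in> carrier G" "y \<in> carrier G" for x y
    using ci that by (simp add: iso_def hom_def)
  show ?thesis
  proof (intro bexI conjI ballI)
    show "conj u \<circ> rflm t \<in> iso G G" using iso_set_trans[OF rflm_iso[OF t tt] ci] .
    show "(conj u \<circ> rflm t) z = z" using r_z conj_z[OF u] by simp
    fix k assume k: "k \<in> {1..n}"
    show "(conj u \<circ> rflm t) (g k) = g (Transposition.transpose a b k)"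
    proof (cases "k = a \<or> k = b")
      case True
      then show ?thesis
      proof
        assume "k = a" then show ?thesis using r_a cu[OF b] ab by simp
      next
        assume kb: "k = b"
        have "conj u (z \<otimes> g a) = z \<otimes> (g a \<otimes> z)" using chom[OF zG ga] conj_z[OF u] cu[OF a] by simp
        also have "\<dots> = g a" using zG ga zz by (simp add: m_assoc[symmetric] zc[OF ga]) (simp add: m_assoc)
        finally show ?thesis using kb r_b ab by simp
      qed
    next
      case False
      then show ?thesis using r_k[OF k] cu[OF k] by simp
    qed
  qed
qed


lemma perm_aut:
  assumes ev: "even n" and p: "p permutes {1..n}"
  shows "\<exists>\<phi>\<in>iso G G. (\<forall>k\<in>{1..n}. \<phi> (g k) = g (p k)) \<and> \<phi> z = z"
  using p finite_atLeastAtMost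
proof (induction p rule: permutes_induct)
  case id
  then show ?case using iso_set_refl by fastforce
next
  case (swap a b p)
  obtain \<phi> where \<phi>: "\<phi> \<in> iso G G" "\<forall>k\<in>{1..n}. \<phi> (g k) = g (p k)" "\<phi> z = z" using swap by blast
  obtain \<tau> where \<tau>: "\<tau> \<in> iso G G" "\<forall>k\<in>{1..n}. \<tau> (g k) = g (Transposition.transpose a b k)" "\<tau> z = z"
    using transp[OF ev swap(1,2,3)] by blast
  show ?case
  proof (intro bexI conjI ballI)
    show "\<tau> \<circ> \<phi> \<in> iso G G" using iso_set_trans[OF \<phi>(1) \<tau>(1)] .
    show "(\<tau> \<circ> \<phi>) z = z" using \<phi> \<tau> by simp
    fix k assume k: "k \<in> {1..n}"
    then have "p k \<in> {1..n}" using swap permutes_in_image by metis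
    then show "(\<tau> \<circ> \<phi>) (g k) = g ((Transposition.transpose a b \<circ> p) k)" using \<phi> \<tau> k by simp
  qed
qed

lemma adj_iff: "cay_adj G (g ` {1..n}) x y \<longleftrightarrow>
   x \<in> carrier G \<and> y \<in> carrier G \<and> (\<exists>i\<in>{1..n}. y = g i \<otimes> x)"
proof
  assume "cay_adj G (g ` {1..n}) x y"
  then obtain i where i: "i \<in> {1..n}" and x: "x \<in> carrier G" and y: "y \<in> carrier G"
    and e: "y = g i \<otimes> x \<or> x = g i \<otimes> y" unfolding cay_adj_def by blast
  have "y = g i \<otimes> x"
    using e
  proof
    assume "x = g i \<otimes> y"
    then show ?thesis using gsq[OF i] gG[OF i] y by (simp add: m_assoc[symmetric])
  qed
  then show "x \<in> carrier G \<and> y \<in> carrier G \<and> (\<exists>i\<in>{1..n}. y = g i \<otimes> x)" using i x y by blast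
next
  assume "x \<in> carrier G \<and> y \<in> carrier G \<and> (\<exists>i\<in>{1..n}. y = g i \<otimes> x)"
  then show "cay_adj G (g ` {1..n}) x y" unfolding cay_adj_def by blast
qed

end

lemma (in group) cz_derive:
  assumes zG: "z \<in> carrier G"
    and zc: "\<And>x. x \<in> carrier G \<Longrightarrow> z \<otimes>\<^bsub>G\<^esub> x = x \<otimes>\<^bsub>G\<^esub> z"
    and zz: "z \<otimes>\<^bsub>G\<^esub> z = \<one>\<^bsub>G\<^esub>"
    and quot: "\<forall>x\<in>carrier G. x \<otimes>\<^bsub>G\<^esub> x \<in> {\<one>\<^bsub>G\<^esub>, z}"
    and x: "x \<in> carrier G" and y: "y \<in> carrier G" and ne: "x \<otimes>\<^bsub>G\<^esub> y \<noteq> y \<otimes>\<^bsub>G\<^esub> x"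
  shows "x \<otimes>\<^bsub>G\<^esub> y = y \<otimes>\<^bsub>G\<^esub> x \<otimes>\<^bsub>G\<^esub> z"
proof -
  let ?C = "{\<one>, z}"
  have Cc: "c \<in> ?C \<Longrightarrow> w \<in> carrier G \<Longrightarrow> c \<otimes> w = w \<otimes> c" for c w using zc by auto
  have Cc2: "c \<in> ?C \<Longrightarrow> w \<in> carrier G \<Longrightarrow> v \<in> carrier G \<Longrightarrow> w \<otimes> (c \<otimes> v) = c \<otimes> (w \<otimes> v)" for c w v
    using Cc zG by (metis insert_iff singletonD one_closed m_assoc)
  have CG: "c \<in> ?C \<Longrightarrow> c \<in> carrier G" for c using zG by auto
  have Cinv: "c \<in> ?C \<Longrightarrow> c \<otimes> c = \<one>" for c using zz by auto
  have invw: "inv w = w \<otimes> (w \<otimes> w)" if w: "w \<in> carrier G" for w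
  proof -
    have "w \<otimes> (w \<otimes> (w \<otimes> w)) = \<one>" using w Cinv[of "w \<otimes> w"] quot by (simp add: m_assoc[symmetric])
    then show ?thesis using w by (metis inv_equality m_closed m_assoc[symmetric] Cc quot)
  qed
  define e where "e = (x \<otimes> y) \<otimes> (x \<otimes> y)"
  define ex where "ex = x \<otimes> x"
  define ey where "ey = y \<otimes> y"
  have eC: "e \<in> ?C" "ex \<in> ?C" "ey \<in> ?C" using quot x y by (auto simp: e_def ex_def ey_def)
  have "y \<otimes> x = inv x \<otimes> e \<otimes> inv y" using x y
    by (simp add: e_def m_assoc) (simp add: m_assoc[symmetric])
  also have "\<dots> = inv x \<otimes> inv y \<otimes> e" using Cc[OF eC(1), of "inv y"] x y CG[OF eC(1)] by (simp add: m_assoc)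
  also have "\<dots> = x \<otimes> ex \<otimes> (y \<otimes> ey) \<otimes> e" using invw x y by (simp add: ex_def ey_def)
  also have "\<dots> = x \<otimes> y \<otimes> (ex \<otimes> ey \<otimes> e)" using Cc2[OF eC(2)] x y CG eC by (simp add: m_assoc)
  finally have yx: "y \<otimes> x = x \<otimes> y \<otimes> (ex \<otimes> ey \<otimes> e)" .
  have "ex \<otimes> ey \<otimes> e \<in> ?C" using eC zz zG by auto
  moreover have "ex \<otimes> ey \<otimes> e \<noteq> \<one>" using yx ne x y by auto
  ultimately have "y \<otimes> x = x \<otimes> y \<otimes> z" using yx by auto
  then have "y \<otimes> x \<otimes> z = x \<otimes> y" using x y zG zz by (simp add: m_assoc)
  then show ?thesis by simp
qed

lemma (in group) main_aux:
  fixes r :: nat and z :: 'a and g :: "nat \<Rightarrow> 'a"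
  assumes fin: "finite (carrier G)"
    and r1: "r \<ge> 1"
    and ord: "card (carrier G) = 2 ^ (2 * r + 1)"
    and zG: "z \<in> carrier G" and z1: "z \<noteq> \<one>\<^bsub>G\<^esub>"
    and Z: "grp_center G = {\<one>\<^bsub>G\<^esub>, z}"
    and quot: "\<forall>x\<in>carrier G. x \<otimes>\<^bsub>G\<^esub> x \<in> {\<one>\<^bsub>G\<^esub>, z}"
    and gG: "\<forall>i\<in>{1..2*r}. g i \<in> carrier G"
    and gsq: "\<forall>i\<in>{1..2*r}. g i \<otimes>\<^bsub>G\<^esub> g i = \<one>\<^bsub>G\<^esub>"
    and gcomm: "\<forall>i\<in>{1..2*r}. \<forall>j\<in>{1..2*r}. i \<noteq> j \<longrightarrow> grp_comm G (g i) (g j) = z"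
    and span: "generate G (g ` {1..2*r}) = carrier G"
  shows
    "(\<forall>\<sigma>. \<sigma> permutes {1..2*r} \<longrightarrow>
        (\<exists>\<phi>. \<phi> \<in> iso G G \<and> (\<forall>i\<in>{1..2*r}. \<phi> (g i) = g (\<sigma> i)) \<and> \<phi> z = z))
     \<and> (\<forall>u v w u' v' w'. two_arc G (g ` {1..2*r}) u v w \<and> two_arc G (g ` {1..2*r}) u' v' w' \<longrightarrow>
        (\<exists>h \<in> carrier G. \<exists>\<sigma> \<phi>. \<sigma> permutes {1..2*r} \<and> \<phi> \<in> iso G G \<and>
            (\<forall>i\<in>{1..2*r}. \<phi> (g i) = g (\<sigma> i)) \<and> \<phi> z = z \<and>
            cay_aut G (g ` {1..2*r}) (\<lambda>x. \<phi> x \<otimes>\<^bsub>G\<^esub> h) \<and>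
            \<phi> u \<otimes>\<^bsub>G\<^esub> h = u' \<and> \<phi> v \<otimes>\<^bsub>G\<^esub> h = v' \<and> \<phi> w \<otimes>\<^bsub>G\<^esub> h = w'))"
proof -
  define S where "S = g ` {1..2*r}"
  have zc: "z \<otimes> x = x \<otimes> z" if "x \<in> carrier G" for x
    using Z that unfolding grp_center_def by auto
  have zz: "z \<otimes> z = \<one>"
  proof -
    have "z \<otimes> z \<in> {\<one>, z}" using quot zG by auto
    moreover have "z \<otimes> z \<noteq> z" using z1 zG by (metis r_cancel_one)
    ultimately show ?thesis by auto
  qed
  have gc: "g i \<otimes> g j = g j \<otimes> g i \<otimes> z" if "i \<in> {1..2*r}" "j \<in> {1..2*r}" "i \<noteq> j" for i j
  proof -
    have gi: "g i \<in> carrier G" and gj: "g j \<in> carrier G" using gG that by auto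
    have ii: "inv (g i) = g i" and jj: "inv (g j) = g j" using gsq that gi gj by (auto intro: inv_equality)
    have c: "g i \<otimes> g j \<otimes> g i \<otimes> g j = z" using gcomm[rule_format, OF that] ii jj by (simp add: grp_comm_def)
    have "g i \<otimes> g j = (g i \<otimes> g j \<otimes> g i \<otimes> g j) \<otimes> (g j \<otimes> g i)" using gi gj gsq that
      by (simp add: m_assoc) (simp add: m_assoc[symmetric])
    also have "\<dots> = g j \<otimes> g i \<otimes> z" using c zc gi gj by simp
    finally show ?thesis .
  qed
  interpret X: xsp G z g "2*r"
    apply unfold_locales
    apply (rule zG)
    apply (rule z1)
    apply (erule zc)
    apply (rule zz)
    apply (rule cz_derive[OF zG zc zz quot]; assumption)
    apply (simp add: gG)
    apply (simp add: gsq)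
    apply (rule gc; assumption)
    done
  have ev: "even (2*r)" by simp
  have part1: "\<forall>\<sigma>. \<sigma> permutes {1..2*r} \<longrightarrow>
        (\<exists>\<phi>. \<phi> \<in> iso G G \<and> (\<forall>i\<in>{1..2*r}. \<phi> (g i) = g (\<sigma> i)) \<and> \<phi> z = z)"
    using X.perm_aut[OF ev] by blast
  show ?thesis
  proof (intro conjI part1 allI impI)
    fix u v w u' v' w'
    assume "two_arc G (g ` {1..2*r}) u v w \<and> two_arc G (g ` {1..2*r}) u' v' w'"
    then have a1: "cay_adj G S u v" "cay_adj G S v w" "u \<noteq> w"
      and a2: "cay_adj G S u' v'" "cay_adj G S v' w'" "u' \<noteq> w'"
      unfolding two_arc_def S_def by auto
    obtain i j where u: "u \<in> carrier G" and v: "v \<in> carrier G" and w: "w \<in> carrier G"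
      and i: "i \<in> {1..2*r}" and j: "j \<in> {1..2*r}" and vi: "v = g i \<otimes> u" and wj: "w = g j \<otimes> v"
      using a1 X.adj_iff unfolding S_def by meson
    obtain i' j' where u': "u' \<in> carrier G" and v': "v' \<in> carrier G" and w': "w' \<in> carrier G"
      and i': "i' \<in> {1..2*r}" and j': "j' \<in> {1..2*r}" and vi': "v' = g i' \<otimes> u'" and wj': "w' = g j' \<otimes> v'"
      using a2 X.adj_iff unfolding S_def by meson
    have ij: "i \<noteq> j"
    proof
      assume "i = j"
      then have "w = u" using wj vi gsq i u gG by (simp add: m_assoc[symmetric])
      then show False using a1 by simp
    qed
    have ij': "i' \<noteq> j'"
    proof
      assume "i' = j'"
      then have "w' = u'" using wj' vi' gsq i' u' gG by (simp add: m_assoc[symmetric])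
      then show False using a2 by simp
    qed
    define tj where "tj = Transposition.transpose i i' j"
    define \<sigma> where "\<sigma> = Transposition.transpose tj j' \<circ> Transposition.transpose i i'"
    have tj: "tj \<in> {1..2*r}" using i i' j by (auto simp: tj_def transpose_def)
    have tji: "tj \<noteq> i'" using ij by (auto simp: tj_def transpose_def)
    have \<sigma>p: "\<sigma> permutes {1..2*r}" unfolding \<sigma>_def
      by (intro permutes_compose permutes_swap_id i i' tj j')
    have \<sigma>i: "\<sigma> i = i'" using tji ij' by (auto simp: \<sigma>_def transpose_def)
    have \<sigma>j: "\<sigma> j = j'" by (simp add: \<sigma>_def tj_def[symmetric])
    obtain \<phi> where \<phi>: "\<phi> \<in> iso G G" "\<forall>k\<in>{1..2*r}. \<phi> (g k) = g (\<sigma> k)" "\<phi> z = z"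
      using X.perm_aut[OF ev \<sigma>p] by blast
    have \<phi>G: "x \<in> carrier G \<Longrightarrow> \<phi> x \<in> carrier G" for x using \<phi>(1) by (auto simp: iso_def hom_def)
    have \<phi>m: "x \<in> carrier G \<Longrightarrow> y \<in> carrier G \<Longrightarrow> \<phi> (x \<otimes> y) = \<phi> x \<otimes> \<phi> y" for x y
      using \<phi>(1) by (auto simp: iso_def hom_def)
    have \<phi>inj: "inj_on \<phi> (carrier G)" and \<phi>surj: "\<phi> ` carrier G = carrier G"
      using \<phi>(1) by (auto simp: iso_iff)
    define h where "h = inv (\<phi> u) \<otimes> u'"
    have h: "h \<in> carrier G" using \<phi>G[OF u] u' by (simp add: h_def)
    have fu: "\<phi> u \<otimes> h = u'" using \<phi>G[OF u] u' by (simp add: h_def m_assoc[symmetric])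
    have fv: "\<phi> v \<otimes> h = v'" using \<phi>m[OF gG[rule_format, OF i] u] \<phi>(2) i \<sigma>i fu vi vi' \<phi>G[OF u] h gG[rule_format, OF i']
      by (simp add: m_assoc)
    have fw: "\<phi> w \<otimes> h = w'" using \<phi>m[OF gG[rule_format, OF j] v] \<phi>(2) j \<sigma>j fv wj wj' \<phi>G[OF v] h gG[rule_format, OF j']
      by (simp add: m_assoc)
    let ?f = "\<lambda>x. \<phi> x \<otimes> h"
    have finj: "inj_on ?f (carrier G)"
      by (rule inj_onI) (use \<phi>inj h \<phi>G in \<open>auto simp: inj_on_def\<close>)
    have fsurj: "?f ` carrier G = carrier G"
    proof (rule subset_antisym)
      show "?f ` carrier G \<subseteq> carrier G" using \<phi>G h by auto
      show "carrier G \<subseteq> ?f ` carrier G"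
      proof
        fix y assume y: "y \<in> carrier G"
        then have "y \<otimes> inv h \<in> \<phi> ` carrier G" using h \<phi>surj by simp
        then obtain x where x: "x \<in> carrier G" "\<phi> x = y \<otimes> inv h" by auto
        then have "?f x = y" using y h by (simp add: m_assoc)
        then show "y \<in> ?f ` carrier G" using x by force
      qed
    qed
    have adj: "cay_adj G S x y \<longleftrightarrow> cay_adj G S (?f x) (?f y)" if x: "x \<in> carrier G" and y: "y \<in> carrier G" for x y
    proof
      assume "cay_adj G S x y"
      then obtain k where k: "k \<in> {1..2*r}" and yk: "y = g k \<otimes> x" using X.adj_iff unfolding S_def by blast
      have sk: "\<sigma> k \<in> {1..2*r}" using \<sigma>p k permutes_in_image by metis
      have "?f y = g (\<sigma> k) \<otimes> ?f x" using yk \<phi>m[OF gG[rule_format, OF k] x] \<phi>(2) k \<phi>G[OF x] h gG[rule_format, OF sk]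
        by (simp add: m_assoc)
      moreover note sk
      ultimately show "cay_adj G S (?f x) (?f y)" using X.adj_iff \<phi>G x y h gG[rule_format, OF sk] unfolding S_def by auto
    next
      assume "cay_adj G S (?f x) (?f y)"
      then obtain k where k: "k \<in> {1..2*r}" and yk: "?f y = g k \<otimes> ?f x" using X.adj_iff unfolding S_def by blast
      obtain k0 where k0: "k0 \<in> {1..2*r}" "\<sigma> k0 = k" using \<sigma>p k by (metis permutes_in_image permutes_inverses(1))
      have "?f y = \<phi> (g k0 \<otimes> x) \<otimes> h" using yk \<phi>m[OF gG[rule_format, OF k0(1)] x] \<phi>(2) k0 gG[rule_format, OF k] \<phi>G[OF x] h by (simp add: m_assoc)
      have gk0x: "g k0 \<otimes> x \<in> carrier G" using gG k0(1) x by simp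
      have "\<phi> y \<otimes> h = \<phi> (g k0 \<otimes> x) \<otimes> h" using \<open>?f y = \<phi> (g k0 \<otimes> x) \<otimes> h\<close> .
      then have "\<phi> y = \<phi> (g k0 \<otimes> x)" by (rule r_cancel[OF _ \<phi>G[OF y] \<phi>G[OF gk0x] h])
      then have "y = g k0 \<otimes> x" using inj_onD[OF \<phi>inj _ y gk0x] by simp
      then show "cay_adj G S x y" using X.adj_iff x y k0 unfolding S_def by auto
    qed
    have ca: "cay_aut G (g ` {1..2*r}) ?f" unfolding cay_aut_def bij_betw_def S_def[symmetric]
    proof (intro conjI ballI finj fsurj)
      fix x y assume "x \<in> carrier G" "y \<in> carrier G"
      then show "cay_adj G S x y = cay_adj G S (?f x) (?f y)" by (rule adj)
    qed
    show "\<exists>h \<in> carrier G. \<exists>\<sigma> \<phi>. \<sigma> permutes {1..2*r} \<and> \<phi> \<in> iso G G \<and>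
            (\<forall>i\<in>{1..2*r}. \<phi> (g i) = g (\<sigma> i)) \<and> \<phi> z = z \<and>
            cay_aut G (g ` {1..2*r}) (\<lambda>x. \<phi> x \<otimes>\<^bsub>G\<^esub> h) \<and>
            \<phi> u \<otimes>\<^bsub>G\<^esub> h = u' \<and> \<phi> v \<otimes>\<^bsub>G\<^esub> h = v' \<and> \<phi> w \<otimes>\<^bsub>G\<^esub> h = w'"
      apply (rule bexI[OF _ h])
      apply (rule exI[of _ \<sigma>])
      apply (rule exI[of _ \<phi>])
      using \<sigma>p \<phi>(1) \<phi>(2) \<phi>(3) ca fu fv fw by (intro conjI)
  qed
qed


theorem theorem4p2:
  fixes G :: "('a, 'b) monoid_scheme" and r :: nat and z :: 'a and g :: "nat \<Rightarrow> 'a"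
  assumes grp: "group G"
    and fin: "finite (carrier G)"
    and r1: "r \<ge> 1"
    and ord: "card (carrier G) = 2 ^ (2 * r + 1)"
    and zG: "z \<in> carrier G" and z1: "z \<noteq> \<one>\<^bsub>G\<^esub>"
    and Z: "grp_center G = {\<one>\<^bsub>G\<^esub>, z}"
    and quot: "\<forall>x\<in>carrier G. x \<otimes>\<^bsub>G\<^esub> x \<in> {\<one>\<^bsub>G\<^esub>, z}"
    and gG: "\<forall>i\<in>{1..2*r}. g i \<in> carrier G"
    and gsq: "\<forall>i\<in>{1..2*r}. g i \<otimes>\<^bsub>G\<^esub> g i = \<one>\<^bsub>G\<^esub>"
    and gcomm: "\<forall>i\<in>{1..2*r}. \<forall>j\<in>{1..2*r}. i \<noteq> j \<longrightarrow> grp_comm G (g i) (g j) = z"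
    and span: "generate G (g ` {1..2*r}) = carrier G"
  defines "S \<equiv> g ` {1..2*r}"
  shows
    "(\<forall>\<sigma>. \<sigma> permutes {1..2*r} \<longrightarrow>
        (\<exists>\<phi>. \<phi> \<in> iso G G \<and> (\<forall>i\<in>{1..2*r}. \<phi> (g i) = g (\<sigma> i)) \<and> \<phi> z = z))
     \<and> (\<forall>u v w u' v' w'. two_arc G S u v w \<and> two_arc G S u' v' w' \<longrightarrow>
        (\<exists>h \<in> carrier G. \<exists>\<sigma> \<phi>. \<sigma> permutes {1..2*r} \<and> \<phi> \<in> iso G G \<and>
            (\<forall>i\<in>{1..2*r}. \<phi> (g i) = g (\<sigma> i)) \<and> \<phi> z = z \<and>
            cay_aut G S (\<lambda>x. \<phi> x \<otimes>\<^bsub>G\<^esub> h) \<and>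
            \<phi> u \<otimes>\<^bsub>G\<^esub> h = u' \<and> \<phi> v \<otimes>\<^bsub>G\<^esub> h = v' \<and> \<phi> w \<otimes>\<^bsub>G\<^esub> h = w'))"
  unfolding S_def by (rule group.main_aux[OF grp fin r1 ord zG z1 Z quot gG gsq gcomm span])

end
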